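(* Let $G$ be a connected (finite, simple) graph, let $\mathcal{F}$ be a maximum induced forest of $G$ having the fewest connected components among all maximum induced forests of $G$, let $H$ be the contracted graph and let $B$ be a skeleton of $H$ whose configuration vector is lexicographically highest among all skeletons of $H$ (all as defined in the context). Let $B_1$ be the inner skeleton. Let $v$ be a non-tree vertex and let $x_{T_1}$ be a tree vertex that is a descendant of $v$ in $B_1$. If $vx_{T_1}$ is a 2-edge of $H$, then $x_{T_1}$ is a child of $v$ in $B_1$.
   Context: A maximum induced forest of $G$ is an induced forest with the maximum number of vertices. Let $\mathcal{T}$ be the set of connected components (trees) of $\mathcal{F}$ and $S=V(G)\setminus V(\mathcal{F})$. The graph $H$ has vertex set $\{x_T : T\in\mathcal{T}\}\cup S$ (the $x_T$ are tree vertices, the vertices of $S$ non-tree vertices) and edge set consisting of all edges of $G[S]$ together with all pairs $ux_T$ with $u\in S$, $T\in\mathcal{T}$ such that $u$ has at least one neighbor in $V(T)$ in $G$. An edge $ux_T$ of $H$ is a 2-edge if $u$ has at least two neighbors in $V(T)$ in $G$; all other edges of $H$ are 1-edges. A skeleton is a spanning tree of $H$ rooted at some tree vertex, with all edges directed towards the root. For a skeleton $B$ with root $r$, the level $\ell_B(v)$ of a vertex $v$ is the number of vertices on the path from $v$ to $r$ in $B$ (so $\ell_B(r)=1$), and the configuration vector of $B$ is $\langle |E_2(B)|, \sum_{v:\ell_B(v)=1}\deg_B(v), \sum_{v:\ell_B(v)=2}\deg_B(v),\ldots,\sum_{v:\ell_B(v)=|V(H)|}\deg_B(v)\rangle$,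 where $E_2(B)$ is the set of 2-edges of $B$ and $\deg_B(v)$ is the total (in plus out) degree of $v$ in $B$. Let $L_S$ be the set of vertices of $S$ that are leaves of $B$; the inner skeleton is $B_1=B[V(B)\setminus L_S]$. Parent, child and descendant refer to the rooted in-arborescence $B_1$ (edges directed from child to parent). *)

theory Defs
  imports Main
begin

(* Simple graphs are given by a vertex set V and a set E of edges, each edge
   being a two-element set {u,w}. *)

definition walk :: "'v set \<Rightarrow> 'v set set \<Rightarrow> 'v list \<Rightarrow> bool" where
  "walk V E xs \<longleftrightarrow> xs \<noteq> [] \<and> set xs \<subseteq> V \<and>
     (\<forall>i. Suc i < length xs \<longrightarrow> {xs ! i, xs ! Suc i} \<in> E)"

definition gpath :: "'v set \<Rightarrow> 'v set set \<Rightarrow> 'v list \<Rightarrow> bool" where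
  "gpath V E xs \<longleftrightarrow> walk V E xs \<and> distinct xs"

definition reachable :: "'v set \<Rightarrow> 'v set set \<Rightarrow> 'v \<Rightarrow> 'v \<Rightarrow> bool" where
  "reachable V E u w \<longleftrightarrow> (\<exists>xs. walk V E xs \<and> hd xs = u \<and> last xs = w)"

definition gconnected :: "'v set \<Rightarrow> 'v set set \<Rightarrow> bool" where
  "gconnected V E \<longleftrightarrow> (\<forall>u\<in>V. \<forall>w\<in>V. reachable V E u w)"

definition has_cycle :: "'v set \<Rightarrow> 'v set set \<Rightarrow> bool" where
  "has_cycle V E \<longleftrightarrow> (\<exists>xs. gpath V E xs \<and> 3 \<le> length xs \<and> {last xs, hd xs} \<in> E)"

definition induced_edges :: "'v set set \<Rightarrow> 'v set \<Rightarrow> 'v set set" where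
  "induced_edges E X = {e \<in> E. e \<subseteq> X}"

definition induced_forest :: "'v set \<Rightarrow> 'v set set \<Rightarrow> 'v set \<Rightarrow> bool" where
  "induced_forest V E X \<longleftrightarrow> X \<subseteq> V \<and> \<not> has_cycle X (induced_edges E X)"

definition components :: "'v set \<Rightarrow> 'v set set \<Rightarrow> 'v set set" where
  "components V E = {{w \<in> V. reachable V E u w} | u. u \<in> V}"

definition is_tree :: "'v set \<Rightarrow> 'v set set \<Rightarrow> bool" where
  "is_tree V E \<longleftrightarrow> gconnected V E \<and> \<not> has_cycle V E"

definition forest_trees :: "'v set set \<Rightarrow> 'v set \<Rightarrow> 'v set set" where
  "forest_trees E F = components F (induced_edges E F)"

(* The graph H: tree vertex x_T is Inl T, non-tree vertex u \<in> S is Inr u *)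
definition H_vertices :: "'v set \<Rightarrow> 'v set set \<Rightarrow> 'v set \<Rightarrow> ('v set + 'v) set" where
  "H_vertices V E F = Inl ` forest_trees E F \<union> Inr ` (V - F)"

definition H_edges :: "'v set \<Rightarrow> 'v set set \<Rightarrow> 'v set \<Rightarrow> ('v set + 'v) set set" where
  "H_edges V E F =
     {{Inr u, Inr w} | u w. u \<in> V - F \<and> w \<in> V - F \<and> {u, w} \<in> E} \<union>
     {{Inr u, Inl T} | u T. u \<in> V - F \<and> T \<in> forest_trees E F \<and> (\<exists>t\<in>T. {u, t} \<in> E)}"

definition two_edges :: "'v set \<Rightarrow> 'v set set \<Rightarrow> 'v set \<Rightarrow> ('v set + 'v) set set" where
  "two_edges V E F =
     {{Inr u, Inl T} | u T. u \<in> V - F \<and> T \<in> forest_trees E F \<and> 2 \<le> card {t \<in> T. {u, t} \<in> E}}"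

definition skeleton :: "'v set \<Rightarrow> 'v set set \<Rightarrow> 'v set \<Rightarrow> ('v set + 'v) set set \<Rightarrow> ('v set + 'v) \<Rightarrow> bool" where
  "skeleton V E F B r \<longleftrightarrow> B \<subseteq> H_edges V E F \<and> is_tree (H_vertices V E F) B
     \<and> r \<in> Inl ` forest_trees E F"

definition tree_path :: "'w set \<Rightarrow> 'w set set \<Rightarrow> 'w \<Rightarrow> 'w \<Rightarrow> 'w list" where
  "tree_path VB B v r = (THE xs. gpath VB B xs \<and> hd xs = v \<and> last xs = r)"

definition level :: "'w set \<Rightarrow> 'w set set \<Rightarrow> 'w \<Rightarrow> 'w \<Rightarrow> nat" where
  "level VB B r v = length (tree_path VB B v r)"

definition deg :: "'w set set \<Rightarrow> 'w \<Rightarrow> nat" where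
  "deg B v = card {e \<in> B. v \<in> e}"

definition config :: "'v set \<Rightarrow> 'v set set \<Rightarrow> 'v set \<Rightarrow> ('v set + 'v) set set \<Rightarrow> ('v set + 'v) \<Rightarrow> nat list" where
  "config V E F B r =
     card (B \<inter> two_edges V E F) #
     map (\<lambda>i. \<Sum>w\<in>{w \<in> H_vertices V E F. level (H_vertices V E F) B r w = i}. deg B w)
         [1..<card (H_vertices V E F) + 1]"

definition inner_vertices :: "'v set \<Rightarrow> 'v set set \<Rightarrow> 'v set \<Rightarrow> ('v set + 'v) set set \<Rightarrow> ('v set + 'v) set" where
  "inner_vertices V E F B = H_vertices V E F - {w \<in> Inr ` (V - F). deg B w = 1}"

definition inner_edges :: "'v set \<Rightarrow> 'v set set \<Rightarrow> 'v set \<Rightarrow> ('v set + 'v) set set \<Rightarrow> ('v set + 'v) set set" where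
  "inner_edges V E F B = {e \<in> B. e \<subseteq> inner_vertices V E F B}"

definition descendant :: "'w set \<Rightarrow> 'w set set \<Rightarrow> 'w \<Rightarrow> 'w \<Rightarrow> 'w \<Rightarrow> bool" where
  "descendant VB B1 r v x \<longleftrightarrow> x \<in> VB \<and> v \<in> VB \<and> x \<noteq> v \<and> v \<in> set (tree_path VB B1 x r)"

definition child :: "'w set \<Rightarrow> 'w set set \<Rightarrow> 'w \<Rightarrow> 'w \<Rightarrow> 'w \<Rightarrow> bool" where
  "child VB B1 r v x \<longleftrightarrow> x \<in> VB \<and> v \<in> VB \<and> 2 \<le> length (tree_path VB B1 x r)
     \<and> tree_path VB B1 x r ! 1 = v"

end

theory Submission
  imports Defs
begin

fun wk :: "'w set \<Rightarrow> 'w set set \<Rightarrow> 'w list \<Rightarrow> bool" where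
  "wk V E [] = False"
| "wk V E [a] = (a \<in> V)"
| "wk V E (a # b # xs) = (a \<in> V \<and> {a,b} \<in> E \<and> wk V E (b # xs))"

lemma walk_Cons_Cons: "walk V E (a # b # xs) \<longleftrightarrow> a \<in> V \<and> {a,b} \<in> E \<and> walk V E (b # xs)"
proof
  assume h: "walk V E (a # b # xs)"
  then have a: "a \<in> V" "set (b#xs) \<subseteq> V"
    and e: "\<And>i. Suc i < length (a#b#xs) \<Longrightarrow> {(a#b#xs)!i, (a#b#xs)!Suc i} \<in> E"
    unfolding walk_def by auto
  have "{a,b} \<in> E" using e[of 0] by simp
  moreover have "\<forall>i. Suc i < length (b#xs) \<longrightarrow> {(b#xs)!i, (b#xs)!Suc i} \<in> E"
  proof (intro allI impI)
    fix i assume "Suc i < length (b#xs)"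
    then show "{(b#xs)!i, (b#xs)!Suc i} \<in> E" using e[of "Suc i"] by simp
  qed
  ultimately show "a \<in> V \<and> {a,b} \<in> E \<and> walk V E (b # xs)" using a unfolding walk_def by auto
next
  assume h: "a \<in> V \<and> {a,b} \<in> E \<and> walk V E (b # xs)"
  show "walk V E (a#b#xs)" unfolding walk_def
  proof (intro conjI allI impI)
    fix i assume "Suc i < length (a#b#xs)"
    then show "{(a#b#xs)!i, (a#b#xs)!Suc i} \<in> E"
      using h by (cases i) (auto simp: walk_def)
  qed (use h in \<open>auto simp: walk_def\<close>)
qed

lemma walk_wk: "walk V E xs = wk V E xs"
proof (induction V E xs rule: wk.induct)
  case (3 V E a b xs)
  then show ?case by (simp only: walk_Cons_Cons wk.simps)
qed (auto simp: walk_def)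

lemma wk_hd: "wk V E (b # t) \<Longrightarrow> b \<in> V"
  by (cases t) auto

lemma wk_append: "wk V E (xs @ [z]) \<Longrightarrow> wk V E (z # ys) \<Longrightarrow> wk V E (xs @ z # ys)"
proof (induction xs)
  case (Cons a xs)
  then show ?case by (cases xs) auto
qed auto

lemma wk_appendD1: "wk V E (xs @ ys) \<Longrightarrow> xs \<noteq> [] \<Longrightarrow> wk V E xs"
proof (induction xs)
  case (Cons a xs)
  then show ?case by (cases xs; cases ys) auto
qed auto

lemma wk_appendD2: "wk V E (xs @ ys) \<Longrightarrow> ys \<noteq> [] \<Longrightarrow> wk V E ys"
proof (induction xs)
  case (Cons a xs)
  then show ?case by (cases xs; cases ys) auto
qed auto

lemma wk_rev: "wk V E xs \<Longrightarrow> wk V E (rev xs)"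
proof (induction xs)
  case (Cons a xs)
  note o = Cons
  show ?case
  proof (cases xs)
    case Nil then show ?thesis using o by simp
  next
    case (Cons b t)
    have "wk V E (rev t @ [b])" using o Cons by simp
    moreover have "wk V E [b, a]" using o Cons wk_hd[of V E b t] by (auto simp: insert_commute)
    ultimately show ?thesis using wk_append[of V E "rev t" b "[a]"] Cons by simp
  qed
qed simp

lemma walk_append: "walk V E (xs @ [z]) \<Longrightarrow> walk V E (z # ys) \<Longrightarrow> walk V E (xs @ z # ys)"
  using wk_append by (metis walk_wk)
lemma walk_appendD1: "walk V E (xs @ ys) \<Longrightarrow> xs \<noteq> [] \<Longrightarrow> walk V E xs"
  using wk_appendD1 by (metis walk_wk)
lemma walk_appendD2: "walk V E (xs @ ys) \<Longrightarrow> ys \<noteq> [] \<Longrightarrow> walk V E ys"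
  using wk_appendD2 by (metis walk_wk)
lemma walk_rev: "walk V E xs \<Longrightarrow> walk V E (rev xs)"
  using wk_rev by (metis walk_wk)

lemma walk_to_gpath:
  "walk V E xs \<Longrightarrow> \<exists>ys. gpath V E ys \<and> hd ys = hd xs \<and> last ys = last xs"
proof (induction "length xs" arbitrary: xs rule: less_induct)
  case less
  show ?case
  proof (cases "distinct xs")
    case True then show ?thesis using less.prems unfolding gpath_def by blast
  next
    case False
    then obtain A M C y where xs: "xs = A @ [y] @ M @ [y] @ C"
      using not_distinct_decomp by blast
    have w1: "walk V E (A @ [y])" using less.prems xs walk_appendD1[of V E "A @ [y]"] by simp
    have w2: "walk V E (y # C)" using less.prems xs walk_appendD2[of V E "A @ [y] @ M" "y # C"] by simp
    have w: "walk V E (A @ y # C)" using walk_append[OF w1 w2] .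
    have "length (A @ y # C) < length xs" using xs by simp
    from less.hyps[OF this w] obtain ys where
      "gpath V E ys" "hd ys = hd (A @ y # C)" "last ys = last (A @ y # C)" by blast
    moreover have "hd (A @ y # C) = hd xs" using xs by (cases A) auto
    moreover have "last (A @ y # C) = last xs" using xs by simp
    ultimately show ?thesis by metis
  qed
qed

lemma gpath_unique:
  assumes "\<not> has_cycle V E"
  shows "gpath V E xs \<Longrightarrow> gpath V E ys \<Longrightarrow> hd xs = hd ys \<Longrightarrow> last xs = last ys \<Longrightarrow> xs = ys"
proof (induction xs arbitrary: ys)
  case Nil then show ?case by (simp add: gpath_def walk_def)
next
  case (Cons a xs')
  obtain ys' where ys: "ys = a # ys'" using Cons.prems
    by (cases ys) (auto simp: gpath_def walk_def)
  have dx: "distinct (a # xs')" and dy: "distinct (a # ys')"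
    using Cons.prems ys by (auto simp: gpath_def)
  have wx: "walk V E (a # xs')" and wy: "walk V E (a # ys')"
    using Cons.prems ys by (auto simp: gpath_def)
  show ?case
  proof (cases "xs' = []")
    case True
    show ?thesis
    proof (cases "ys' = []")
      case False
      then have "last ys' \<in> set ys'" by simp
      moreover have "last ys' = a" using Cons.prems ys True False by simp
      ultimately show ?thesis using dy by simp
    qed (use True ys in simp)
  next
    case xne: False
    show ?thesis
    proof (cases "ys' = []")
      case True
      have "last xs' \<in> set xs'" using xne by simp
      moreover have "last xs' = a" using Cons.prems ys True xne by simp
      ultimately show ?thesis using dx by simp
    next
      case yne: False
      obtain b xt where xs': "xs' = b # xt" using xne by (cases xs') auto
      obtain c yt where ys': "ys' = c # yt" using yne by (cases ys') auto
      have gx: "gpath V E xs'" using wx dx xs' by (auto simp: gpath_def walk_Cons_Cons)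
      have gy: "gpath V E ys'" using wy dy ys' by (auto simp: gpath_def walk_Cons_Cons)
      have lst: "last xs' = last ys'" using Cons.prems ys xne yne by simp
      show ?thesis
      proof (cases "b = c")
        case True
        then show ?thesis using Cons.IH[OF gx gy] lst xs' ys' ys by simp
      next
        case bc: False
        have "\<exists>z\<in>set xs'. z \<in> set ys'" using lst xne yne by (metis last_in_set)
        then obtain Pp z R1 where xsp: "xs' = Pp @ z # R1" and zin: "z \<in> set ys'"
          and pn: "\<forall>y\<in>set Pp. y \<notin> set ys'"
          using split_list_first_prop[of xs' "\<lambda>z. z \<in> set ys'"] by blast
        obtain Q R2 where ysp: "ys' = Q @ z # R2" using zin split_list by metis
        define cyc where "cyc = (a # Pp) @ z # rev Q"
        have w1: "walk V E ((a # Pp) @ [z])"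
          using wx xsp walk_appendD1[of V E "(a # Pp) @ [z]" R1] by simp
        have "walk V E (Q @ [z])"
          using wy ysp walk_appendD1[of V E "Q @ [z]" R2] walk_appendD2[of V E "[a]" "Q @ z # R2"]
          by simp
        then have w2: "walk V E (z # rev Q)" using walk_rev by fastforce
        have wc: "walk V E cyc" unfolding cyc_def using walk_append[OF w1 w2] .
        have dc: "distinct cyc" unfolding cyc_def using dx dy xsp ysp pn by auto
        have lc: "3 \<le> length cyc"
        proof (rule ccontr)
          assume "\<not> 3 \<le> length cyc"
          then have "Pp = [] \<and> Q = []" unfolding cyc_def by (cases Pp; cases Q) auto
          then show False using xsp ysp xs' ys' bc by auto
        qed
        have "last cyc = c" unfolding cyc_def using ysp ys' by (cases Q) (auto simp: last_rev)
        moreover have "hd cyc = a" unfolding cyc_def by simp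
        moreover have "{a, c} \<in> E" using wy ys' by (simp add: walk_Cons_Cons)
        ultimately have "has_cycle V E" unfolding has_cycle_def gpath_def
          using wc dc lc by (metis insert_commute)
        then show ?thesis using assms by simp
      qed
    qed
  qed
qed

lemma walk_mono: "walk V1 E1 xs \<Longrightarrow> V1 \<subseteq> V2 \<Longrightarrow> E1 \<subseteq> E2 \<Longrightarrow> walk V2 E2 xs"
  unfolding walk_def by blast

lemma gpath_mono: "gpath V1 E1 xs \<Longrightarrow> V1 \<subseteq> V2 \<Longrightarrow> E1 \<subseteq> E2 \<Longrightarrow> gpath V2 E2 xs"
  unfolding gpath_def using walk_mono by blast

lemma walk_edge: "walk V E xs \<Longrightarrow> Suc i < length xs \<Longrightarrow> {xs!i, xs!Suc i} \<in> E"
  unfolding walk_def by blast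

lemma conn_to_root:
  assumes "\<forall>w\<in>V'. \<exists>xs. walk V' E' xs \<and> hd xs = w \<and> last xs = r"
  shows "gconnected V' E'"
  unfolding gconnected_def reachable_def
proof (intro ballI)
  fix u w assume u: "u \<in> V'" and w: "w \<in> V'"
  obtain xu where xu: "walk V' E' xu" "hd xu = u" "last xu = r" using assms u by blast
  obtain xw where xw: "walk V' E' xw" "hd xw = w" "last xw = r" using assms w by blast
  have xune: "xu \<noteq> []" and xwne: "xw \<noteq> []" using xu xw by (auto simp: walk_def)
  obtain U where U: "xu = U @ [r]" using xune xu(3) by (metis append_butlast_last_id)
  obtain W' where W: "rev xw = r # W'" using xwne xw(3)
    by (metis hd_rev list.collapse rev_is_Nil_conv)
  have "walk V' E' (U @ r # W')"
    using walk_append[of V' E' U r W'] xu(1) U walk_rev[OF xw(1)] W by simp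
  moreover have "hd (U @ r # W') = u" using U xu(2) by (cases U) auto
  moreover have "last (U @ r # W') = w"
  proof -
    have "last (U @ r # W') = last (rev xw)" using W by simp
    also have "\<dots> = w" using xw(2) xwne by (simp add: last_rev)
    finally show ?thesis .
  qed
  ultimately show "\<exists>xs. walk V' E' xs \<and> hd xs = u \<and> last xs = w" by blast
qed

lemma lex_lemma:
  fixes f g :: "nat \<Rightarrow> nat"
  assumes "1 \<le> k" "k \<le> n" "\<And>i. 1 \<le> i \<Longrightarrow> i < k \<Longrightarrow> f i = g i" "f k < g k"
  shows "(map f [1..<n+1], map g [1..<n+1]) \<in> lexord {(a,b). a < b}"
proof -
  have split: "[1..<n+1] = [1..<k] @ k # [k+1..<n+1]"
  proof -
    have s1: "[1..<n+1] = [1..<k] @ [k..<n+1]" using upt_add_eq_append[of 1 k "n+1-k"] assms(1,2) by simp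
    have s2: "[k..<n+1] = k # [k+1..<n+1]" using upt_conv_Cons assms(1,2) by simp
    show ?thesis using s1 s2 by simp
  qed
  have eq: "map f [1..<k] = map g [1..<k]" using assms(3) by simp
  have "map g [1..<n+1] = map f [1..<k] @ g k # map g [k+1..<n+1]" using split eq by simp
  moreover have "map f [1..<n+1] = map f [1..<k] @ f k # map f [k+1..<n+1]" using split by simp
  ultimately show ?thesis unfolding lexord_def using assms(4) by blast
qed

lemma depth_acyclic:
  assumes ed: "\<forall>e\<in>E'. \<exists>w. e = {w, f w} \<and> d (f w) < (d w :: nat)"
  shows "\<not> has_cycle V' E'"
proof
  assume "has_cycle V' E'"
  then obtain xs where g: "gpath V' E' xs" and l3: "3 \<le> length xs" and cl: "{last xs, hd xs} \<in> E'"
    unfolding has_cycle_def by blast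
  have ne: "xs \<noteq> []" using l3 by auto
  define n where "n = length xs"
  define nx where "nx i = (if i + 1 < n then i + 1 else 0)" for i
  have adj: "{xs!i, xs!nx i} \<in> E'" if "i < n" for i
  proof (cases "i + 1 < n")
    case True then show ?thesis using g walk_edge[of V' E' xs i] unfolding nx_def n_def gpath_def by simp
  next
    case False
    then have "i = n - 1" using that by simp
    then have "xs ! i = last xs" "xs ! nx i = hd xs" using l3 False ne unfolding n_def nx_def
      by (auto simp: last_conv_nth hd_conv_nth)
    then show ?thesis using cl by simp
  qed
  have dist: "distinct xs" using g by (simp add: gpath_def)
  define m where "m = Max (d ` set xs)"
  have "m \<in> d ` set xs" unfolding m_def using ne by simp
  then obtain y0 where y0: "y0 \<in> set xs" "d y0 = m" by blast
  then obtain k where k: "k < n" "xs ! k = y0" using y0(1) unfolding in_set_conv_nth n_def by blast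
  have kd: "d (xs!k) = m" using k y0 by simp
  have mx: "d y \<le> m" if "y \<in> set xs" for y unfolding m_def using that by (intro Max_ge) auto
  have key: "y = f (xs!k)" if e1: "{xs!k, y} \<in> E'" and yin: "y \<in> set xs" for y
  proof -
    obtain w where w: "{xs!k, y} = {w, f w}" "d (f w) < d w" using bspec[OF ed e1] by metis
    then have "(xs!k = w \<and> y = f w) \<or> (xs!k = f w \<and> y = w)" using doubleton_eq_iff by metis
    then show ?thesis
    proof
      assume "xs!k = f w \<and> y = w"
      then have "d (xs!k) < d y" using w(2) by simp
      then show ?thesis using mx[OF yin] kd by simp
    next
      assume "xs!k = w \<and> y = f w"
      then show ?thesis by simp
    qed
  qed
  define pv where "pv = (if k = 0 then n - 1 else k - 1)"
  have pvn: "pv < n" using k(1) unfolding pv_def by auto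
  have pvk: "nx pv = k" using k(1) l3 unfolding pv_def nx_def n_def by auto
  have nxn: "nx k < n" using k(1) l3 unfolding nx_def n_def by auto
  have y1: "xs ! nx k = f (xs!k)" using key[OF adj[OF k(1)]] nxn by (simp add: n_def)
  have "{xs!k, xs!pv} \<in> E'" using adj[OF pvn] pvk by (simp add: insert_commute)
  then have y2: "xs ! pv = f (xs!k)" using key pvn by (simp add: n_def)
  have "nx k \<noteq> pv" using k(1) l3 unfolding pv_def nx_def n_def by auto
  moreover have "xs ! nx k = xs ! pv" using y1 y2 by simp
  ultimately show False using pvn nxn nth_eq_iff_index_eq[OF dist] unfolding n_def by blast
qed

locale rtree =
  fixes VB :: "'w set" and B :: "'w set set" and r :: 'w
  assumes edges: "\<forall>e\<in>B. \<exists>a b. e = {a,b} \<and> a \<noteq> b \<and> a \<in> VB \<and> b \<in> VB"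
    and conn: "\<forall>w\<in>VB. \<exists>xs. walk VB B xs \<and> hd xs = w \<and> last xs = r"
    and acyc: "\<not> has_cycle VB B"
    and rin: "r \<in> VB"
begin

abbreviation P where "P w \<equiv> tree_path VB B w r"

lemma P_unique: "gpath VB B xs \<Longrightarrow> hd xs = w \<Longrightarrow> last xs = r \<Longrightarrow> P w = xs"
  unfolding tree_path_def
proof (rule the_equality)
  assume a: "gpath VB B xs" "hd xs = w" "last xs = r"
  then show "gpath VB B xs \<and> hd xs = w \<and> last xs = r" by simp
  fix ys assume "gpath VB B ys \<and> hd ys = w \<and> last ys = r"
  then show "ys = xs" using gpath_unique[OF acyc, of ys xs] a by simp
qed

lemma P_props: "w \<in> VB \<Longrightarrow> gpath VB B (P w) \<and> hd (P w) = w \<and> last (P w) = r"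
proof -
  assume "w \<in> VB"
  then obtain xs where "walk VB B xs" "hd xs = w" "last xs = r" using conn by blast
  then obtain ys where ys: "gpath VB B ys" "hd ys = w" "last ys = r" using walk_to_gpath by metis
  then show ?thesis using P_unique[OF ys] by simp
qed

lemma P_ne: "w \<in> VB \<Longrightarrow> P w \<noteq> []"
  using P_props by (auto simp: gpath_def walk_def)

lemma P_set: "w \<in> VB \<Longrightarrow> set (P w) \<subseteq> VB"
  using P_props by (auto simp: gpath_def walk_def)

lemma P_dist: "w \<in> VB \<Longrightarrow> distinct (P w)"
  using P_props by (auto simp: gpath_def)

lemma P_walk: "w \<in> VB \<Longrightarrow> walk VB B (P w)"
  using P_props by (auto simp: gpath_def)

lemma P_hd: "w \<in> VB \<Longrightarrow> \<exists>t. P w = w # t"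
  using P_props P_ne by (metis hd_Cons_tl)

lemma P_r: "P r = [r]"
  using P_unique[of "[r]" r] rin by (simp add: gpath_def walk_def)

lemma P_suffix: assumes "w \<in> VB" "y \<in> set (P w)" shows "\<exists>A. P w = A @ P y"
proof -
  obtain A C where AC: "P w = A @ y # C" using assms(2) split_list by metis
  have "walk VB B (y # C)" using P_walk[OF assms(1)] AC walk_appendD2[of VB B A "y # C"] by simp
  moreover have "distinct (y # C)" using P_dist[OF assms(1)] AC by simp
  moreover have "last (y # C) = r" using P_props[OF assms(1)] AC by simp
  ultimately have "P y = y # C" using P_unique[of "y # C" y] by (simp add: gpath_def)
  then show ?thesis using AC by simp
qed

lemma P_suffix_len: assumes "w \<in> VB" "y \<in> set (P w)" "y \<noteq> w" shows "length (P y) < length (P w)"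
proof -
  obtain A where A: "P w = A @ P y" using P_suffix[OF assms(1,2)] by blast
  have "y \<in> VB" using P_set[OF assms(1)] assms(2) by blast
  have "A \<noteq> []"
  proof
    assume "A = []"
    then have "hd (P w) = hd (P y)" using A by simp
    then show False using P_props[OF assms(1)] P_props[OF \<open>y \<in> VB\<close>] assms(3) by simp
  qed
  then show ?thesis using A by simp
qed

lemma P_parent: assumes "w \<in> VB" "w \<noteq> r" shows "P w = w # P (P w ! 1)" "P w ! 1 \<in> VB"
proof -
  obtain t where t: "P w = w # t" using P_hd[OF assms(1)] by blast
  have "t \<noteq> []" using t P_props[OF assms(1)] assms(2) by auto
  then obtain c t' where ct: "t = c # t'" by (cases t) auto
  have "walk VB B (c # t')" using P_walk[OF assms(1)] t ct walk_Cons_Cons by metis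
  moreover have "distinct (c # t')" using P_dist[OF assms(1)] t ct by simp
  moreover have "last (c # t') = r" using P_props[OF assms(1)] t ct by simp
  ultimately have "P c = c # t'" using P_unique[of "c # t'" c] by (simp add: gpath_def)
  then show "P w = w # P (P w ! 1)" using t ct by simp
  show "P w ! 1 \<in> VB" using P_set[OF assms(1)] t ct by auto
qed


lemma edge_parent: assumes "e \<in> B" shows "\<exists>w\<in>VB. w \<noteq> r \<and> e = {w, P w ! 1}"
proof -
  obtain a b where ab: "e = {a,b}" "a \<noteq> b" "a \<in> VB" "b \<in> VB" using bspec[OF edges assms] by metis
  have eab: "{a,b} \<in> B" using ab(1) assms by simp
  show ?thesis
  proof (cases "a \<in> set (P b)")
    case False
    obtain t where t: "P b = b # t" using P_hd[OF ab(4)] by blast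
    have "walk VB B (b # t)" using P_walk[OF ab(4)] t by simp
    then have "walk VB B (a # b # t)" using ab(3) eab by (simp add: walk_Cons_Cons)
    then have "walk VB B (a # P b)" using t by simp
    moreover have "distinct (a # P b)" using P_dist[OF ab(4)] False by simp
    moreover have "last (a # P b) = r" using P_props[OF ab(4)] t by simp
    ultimately have Pa: "P a = a # P b" using P_unique[of "a # P b" a] by (simp add: gpath_def)
    have ar: "a \<noteq> r" using Pa P_r t by auto
    have "P a ! 1 = b" using Pa t by simp
    then have "e = {a, P a ! 1}" using ab(1) by simp
    then show ?thesis using ar ab(3) by blast
  next
    case True
    obtain A where A: "P b = A @ P a" using P_suffix[OF ab(4) True] by blast
    obtain ta where ta: "P a = a # ta" using P_hd[OF ab(3)] by blast
    have "A \<noteq> []"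
    proof
      assume "A = []"
      then have "hd (P b) = hd (P a)" using A by simp
      then show False using P_props[OF ab(3)] P_props[OF ab(4)] ab(2) by simp
    qed
    then obtain c A' where cA: "A = c # A'" by (cases A) auto
    have "c = b" using A cA P_props[OF ab(4)] by simp
    then have A': "A = b # A'" using cA by simp
    show ?thesis
    proof (cases "A' = []")
      case True
      then have Pb: "P b = b # P a" using A A' by simp
      have br: "b \<noteq> r" using Pb P_r ta by auto
      have "P b ! 1 = a" using Pb ta by simp
      then have "e = {b, P b ! 1}" using ab(1) by (simp add: insert_commute)
      then show ?thesis using br ab(4) by blast
    next
      case False
      define cyc where "cyc = b # A' @ [a]"
      have "P b = (b # A' @ [a]) @ ta" using A A' ta by simp
      then have "walk VB B cyc" unfolding cyc_def
        using P_walk[OF ab(4)] walk_appendD1[of VB B "b # A' @ [a]" ta] by simp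
      moreover have "distinct cyc" unfolding cyc_def using P_dist[OF ab(4)] A A' ta by auto
      moreover have "3 \<le> length cyc" unfolding cyc_def using False by (cases A') auto
      moreover have "{last cyc, hd cyc} \<in> B" unfolding cyc_def using eab by simp
      ultimately have "has_cycle VB B" unfolding has_cycle_def gpath_def by blast
      then show ?thesis using acyc by simp
    qed
  qed
qed

end

lemma walk_avoid:
  assumes "walk V E xs" "\<not> (a \<in> set xs \<and> b \<in> set xs)"
  shows "walk V (insert e (E - {{a,b}})) xs"
  unfolding walk_def
proof (intro conjI allI impI)
  show "xs \<noteq> []" "set xs \<subseteq> V" using assms(1) by (auto simp: walk_def)
  fix i assume i: "Suc i < length xs"
  have "{xs ! i, xs ! Suc i} \<in> E" using walk_edge[OF assms(1) i] .
  moreover have "{xs ! i, xs ! Suc i} \<noteq> {a,b}"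
  proof
    assume h: "{xs ! i, xs ! Suc i} = {a,b}"
    have "xs ! i \<in> set xs" "xs ! Suc i \<in> set xs" using i by auto
    moreover have "a \<in> {xs ! i, xs ! Suc i}" "b \<in> {xs ! i, xs ! Suc i}" using h by auto
    ultimately show False using assms(2) by auto
  qed
  ultimately show "{xs ! i, xs ! Suc i} \<in> insert e (E - {{a,b}})" by simp
qed

theorem lemma25:
  fixes V :: "'v set" and E :: "'v set set" and F :: "'v set"
    and B :: "('v set + 'v) set set" and r :: "'v set + 'v"
    and u :: 'v and T1 :: "'v set"
  assumes finV: "finite V"
    and simple: "E \<subseteq> {{a, b} | a b. a \<in> V \<and> b \<in> V \<and> a \<noteq> b}"
    and conn: "gconnected V E"
    and forest: "induced_forest V E F"
    and maximum: "\<forall>X. induced_forest V E X \<longrightarrow> card X \<le> card F"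
    and fewest: "\<forall>X. induced_forest V E X \<and> card X = card F \<longrightarrow>
                    card (forest_trees E F) \<le> card (forest_trees E X)"
    and skel: "skeleton V E F B r"
    and highest: "\<forall>B' r'. skeleton V E F B' r' \<longrightarrow>
                    (config V E F B r, config V E F B' r') \<notin> lexord {(a, b). a < b}"
    and u_nontree: "u \<in> V - F"
    and T1: "T1 \<in> forest_trees E F"
    and desc: "descendant (inner_vertices V E F B) (inner_edges V E F B) r (Inr u) (Inl T1)"
    and two: "{Inr u, Inl T1} \<in> two_edges V E F"
  shows "child (inner_vertices V E F B) (inner_edges V E F B) r (Inr u) (Inl T1)"
proof (rule ccontr)
  assume nc: "\<not> child (inner_vertices V E F B) (inner_edges V E F B) r (Inr u) (Inl T1)"
  define HV where "HV = H_vertices V E F"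
  define x :: "'v set + 'v" where "x = Inl T1"
  define v :: "'v set + 'v" where "v = Inr u"
  define IV where "IV = inner_vertices V E F B"
  define IE where "IE = inner_edges V E F B"
  define TE where "TE = two_edges V E F"
  have FV: "F \<subseteq> V" using forest unfolding induced_forest_def by simp
  have ftsub: "forest_trees E F \<subseteq> Pow F" unfolding forest_trees_def components_def by auto
  have finF: "finite F" using finV FV finite_subset by blast
  have finFT: "finite (forest_trees E F)" using finite_subset[OF ftsub] finF by simp
  have finHV: "finite HV" unfolding HV_def H_vertices_def using finFT finV by simp
  have xHV: "x \<in> HV" unfolding HV_def H_vertices_def x_def using T1 by simp
  have vHV: "v \<in> HV" unfolding HV_def H_vertices_def v_def using u_nontree by simp
  have Bsub: "B \<subseteq> H_edges V E F" and Btree: "is_tree HV B" and rT: "r \<in> Inl ` forest_trees E F"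
    using skel unfolding skeleton_def HV_def by auto
  have rHV: "r \<in> HV" using rT unfolding HV_def H_vertices_def by blast
  have Eneq: "a \<noteq> b" if ab: "{a,b} \<in> E" for a b
  proof
    assume eq: "a = b"
    have "{a,b} \<in> {{c, d} | c d. c \<in> V \<and> d \<in> V \<and> c \<noteq> d}" using simple ab by (rule subsetD)
    then obtain c d where cd: "{a,b} = {c,d}" "c \<noteq> d" unfolding mem_Collect_eq by metis
    then show False using eq by (metis doubleton_eq_iff)
  qed
  have Hed: "\<forall>e\<in>H_edges V E F. \<exists>a b. e = {a,b} \<and> a \<noteq> b \<and> a \<in> HV \<and> b \<in> HV"
  proof
    fix e assume "e \<in> H_edges V E F"
    then consider (a) a b where "e = {Inr a, Inr b}" "a \<in> V - F" "b \<in> V - F" "{a,b} \<in> E"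
      | (b) a T where "e = {Inr a, Inl T}" "a \<in> V - F" "T \<in> forest_trees E F"
      unfolding H_edges_def Un_iff mem_Collect_eq by metis
    then show "\<exists>a b. e = {a,b} \<and> a \<noteq> b \<and> a \<in> HV \<and> b \<in> HV"
    proof cases
      case a
      then have "Inr a \<noteq> (Inr b :: 'v set + 'v)" using Eneq by simp
      then show ?thesis using a by (intro exI[of _ "Inr a"] exI[of _ "Inr b"]) (simp add: HV_def H_vertices_def)
    next
      case b
      then show ?thesis by (intro exI[of _ "Inr a"] exI[of _ "Inl T"]) (simp add: HV_def H_vertices_def)
    qed
  qed
  have two_sub: "TE \<subseteq> H_edges V E F"
  proof
    fix e assume "e \<in> TE"
    then obtain a T where e: "e = {Inr a, Inl T}" "a \<in> V - F" "T \<in> forest_trees E F"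
      "2 \<le> card {t \<in> T. {a, t} \<in> E}" unfolding TE_def two_edges_def by blast
    have "{t \<in> T. {a, t} \<in> E} \<noteq> {}"
    proof
      assume h: "{t \<in> T. {a, t} \<in> E} = {}"
      have "card {t \<in> T. {a, t} \<in> E} = 0" unfolding h by simp
      with e(4) show False by simp
    qed
    then have ex: "\<exists>t\<in>T. {a, t} \<in> E" by blast
    show "e \<in> H_edges V E F" unfolding H_edges_def
      by (rule UnI2) (unfold mem_Collect_eq, use e ex in \<open>intro exI[of _ a] exI[of _ T]; simp\<close>)
  qed
  have Bpow: "e \<subseteq> HV" if "e \<in> B" for e
  proof -
    have "e \<in> H_edges V E F" using Bsub that by (rule subsetD)
    with Hed obtain a b where "e = {a,b}" "a \<in> HV" "b \<in> HV" by metis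
    then show ?thesis by simp
  qed
  have Bfin: "finite B"
  proof -
    have "B \<subseteq> Pow HV" using Bpow by auto
    then show ?thesis using finHV finite_subset by blast
  qed
  interpret T: rtree HV B r
  proof
    show "\<forall>e\<in>B. \<exists>a b. e = {a,b} \<and> a \<noteq> b \<and> a \<in> HV \<and> b \<in> HV"
    proof
      fix e assume "e \<in> B"
      with Bsub have "e \<in> H_edges V E F" by (rule subsetD)
      with Hed show "\<exists>a b. e = {a,b} \<and> a \<noteq> b \<and> a \<in> HV \<and> b \<in> HV" by (rule bspec)
    qed
    show "\<forall>w\<in>HV. \<exists>xs. walk HV B xs \<and> hd xs = w \<and> last xs = r"
      using Btree rHV unfolding is_tree_def gconnected_def reachable_def by blast
    show "\<not> has_cycle HV B" using Btree unfolding is_tree_def by blast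
    show "r \<in> HV" by (rule rHV)
  qed
  define L where "L w = length (T.P w)" for w
  have levB: "level HV B r w = L w" for w by (simp add: level_def L_def)
  have IVsub: "IV \<subseteq> HV" unfolding IV_def inner_vertices_def HV_def by blast
  have IEsub: "IE \<subseteq> B" unfolding IE_def inner_edges_def by blast
  have xinl: "x \<notin> Inr ` (V - F)" unfolding x_def by blast
  have rinl: "r \<notin> Inr ` (V - F)" using rT by blast
  have PxV: "set (T.P x) \<subseteq> IV"
  proof
    fix y assume y: "y \<in> set (T.P x)"
    have yHV: "y \<in> HV" using T.P_set[OF xHV] y by blast
    show "y \<in> IV"
    proof (rule ccontr)
      assume "y \<notin> IV"
      then have yI: "y \<in> Inr ` (V - F)" and dy: "deg B y = 1"
        using yHV unfolding IV_def inner_vertices_def HV_def by auto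
      obtain i where i: "i < length (T.P x)" "T.P x ! i = y" using y by (metis in_set_conv_nth)
      have ne: "T.P x \<noteq> []" using T.P_ne[OF xHV] .
      have i0: "i \<noteq> 0"
      proof
        assume "i = 0"
        then have "y = hd (T.P x)" using i ne by (simp add: hd_conv_nth)
        then have "y = x" using T.P_props[OF xHV] by simp
        then show False using yI xinl by simp
      qed
      have il: "i \<noteq> length (T.P x) - 1"
      proof
        assume "i = length (T.P x) - 1"
        then have "y = last (T.P x)" using i ne by (simp add: last_conv_nth)
        then have "y = r" using T.P_props[OF xHV] by simp
        then show False using yI rinl by simp
      qed
      define a where "a = T.P x ! (i - 1)"
      define b where "b = T.P x ! (i + 1)"
      have e1: "{a, y} \<in> B" using walk_edge[OF T.P_walk[OF xHV], of "i - 1"] i i0 unfolding a_def by simp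
      have e2: "{y, b} \<in> B" using walk_edge[OF T.P_walk[OF xHV], of i] i il unfolding b_def by simp
      have dist: "distinct (T.P x)" using T.P_dist[OF xHV] .
      have ab: "a \<noteq> b" unfolding a_def b_def using nth_eq_iff_index_eq[OF dist, of "i - 1" "i + 1"] i i0 il by simp
      have ay: "a \<noteq> y" unfolding a_def using nth_eq_iff_index_eq[OF dist, of "i - 1" i] i i0 by simp
      have neq: "{a,y} \<noteq> {y,b}"
      proof
        assume "{a,y} = {y,b}"
        then have "(a = y \<and> y = b) \<or> (a = b \<and> y = y)" by (simp only: doubleton_eq_iff)
        then show False using ab ay by simp
      qed
      have sub: "{{a,y},{y,b}} \<subseteq> {e \<in> B. y \<in> e}" using e1 e2 by simp
      have "card {{a,y},{y,b}} = 2" using neq by simp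
      moreover have "card {{a,y},{y,b}} \<le> card {e \<in> B. y \<in> e}" using card_mono[OF _ sub] Bfin by simp
      ultimately show False using dy unfolding deg_def by simp
    qed
  qed
  have Pxg: "gpath IV IE (T.P x)" unfolding gpath_def walk_def
  proof (intro conjI allI impI)
    show "T.P x \<noteq> []" using T.P_ne[OF xHV] .
    show "set (T.P x) \<subseteq> IV" using PxV .
    show "distinct (T.P x)" using T.P_dist[OF xHV] .
    fix i assume i: "Suc i < length (T.P x)"
    have "{T.P x ! i, T.P x ! Suc i} \<in> B" using walk_edge[OF T.P_walk[OF xHV] i] .
    moreover have "{T.P x ! i, T.P x ! Suc i} \<subseteq> IV"
      using PxV i nth_mem[of i "T.P x"] nth_mem[of "Suc i" "T.P x"] by auto
    ultimately show "{T.P x ! i, T.P x ! Suc i} \<in> IE" unfolding IE_def inner_edges_def IV_def by simp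
  qed
  have P1x: "tree_path IV IE x r = T.P x"
    unfolding tree_path_def[of IV IE x r]
  proof (rule the_equality)
    show "gpath IV IE (T.P x) \<and> hd (T.P x) = x \<and> last (T.P x) = r" using Pxg T.P_props[OF xHV] by simp
    fix ys assume ys: "gpath IV IE ys \<and> hd ys = x \<and> last ys = r"
    then have "gpath HV B ys" using gpath_mono IVsub IEsub by blast
    then show "ys = T.P x" using T.P_unique ys by metis
  qed
  have dsc: "x \<in> IV" "v \<in> IV" "x \<noteq> v" "v \<in> set (tree_path IV IE x r)"
    using desc unfolding descendant_def x_def v_def IV_def IE_def by auto
  have vPx: "v \<in> set (T.P x)" using dsc P1x by simp
  obtain tx where tx: "T.P x = x # tx" using T.P_hd[OF xHV] by blast
  have len2: "2 \<le> length (T.P x)"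
  proof -
    have "v \<in> set tx" using vPx tx dsc(3) by simp
    then have "tx \<noteq> []" by auto
    then show ?thesis using tx by (cases tx) auto
  qed
  have pne: "T.P x ! 1 \<noteq> v"
    using nc dsc len2 P1x unfolding child_def x_def v_def IV_def IE_def by simp
  have xr: "x \<noteq> r"
  proof
    assume "x = r"
    then have "T.P x = [x]" using T.P_r by simp
    then show False using vPx dsc(3) by simp
  qed
  define p where "p = T.P x ! 1"
  have Pxp: "T.P x = x # T.P p" and pHV: "p \<in> HV" using T.P_parent[OF xHV xr] unfolding p_def by auto
  have pv: "p \<noteq> v" using pne p_def by simp
  have vPp: "v \<in> set (T.P p)" using vPx Pxp dsc(3) by simp
  have lvp: "L v < L p" using T.P_suffix_len[OF pHV vPp] pv unfolding L_def by simp
  have Lxp: "L x = L p + 1" using Pxp unfolding L_def by simp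
  have xnPp: "x \<notin> set (T.P p)" using T.P_dist[OF xHV] Pxp by simp
  obtain Ap where Ap: "T.P p = Ap @ T.P v" using T.P_suffix[OF pHV vPp] by blast
  have xnPv: "x \<notin> set (T.P v)" using xnPp Ap by simp
  have xpB: "{x,p} \<in> B"
  proof -
    have "{T.P x ! 0, T.P x ! Suc 0} \<in> B" using walk_edge[OF T.P_walk[OF xHV], of 0] len2 by simp
    then show ?thesis using tx p_def by simp
  qed
  have vxB: "{v,x} \<notin> B"
  proof
    assume "{v,x} \<in> B"
    from T.edge_parent[OF this] obtain w where w: "w \<in> HV" "w \<noteq> r" "{v,x} = {w, T.P w ! 1}" by meson
    then have "(v = w \<and> x = T.P w ! 1) \<or> (v = T.P w ! 1 \<and> x = w)" by (simp only: doubleton_eq_iff)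
    then show False
    proof
      assume h: "v = w \<and> x = T.P w ! 1"
      then have "T.P v = v # T.P x" using T.P_parent[OF w(1) w(2)] by simp
      then show False using xnPv tx by simp
    next
      assume h: "v = T.P w ! 1 \<and> x = w"
      then show False using pv p_def by simp
    qed
  qed
  have twoE: "{v,x} \<in> TE" using two unfolding TE_def v_def x_def .
  define B' where "B' = insert {v,x} (B - {{x,p}})"
  define d where "d w = (if x \<in> set (T.P w) then L w - L x + L v + 1 else L w)" for w
  define f where "f w = (if w = x then v else T.P w ! 1)" for w
  have xPx: "x \<in> set (T.P x)" using tx by simp
  have dv: "d v = L v" using xnPv unfolding d_def by simp
  have dx: "d x = L v + 1" using xPx unfolding d_def by simp
  have acyc': "\<not> has_cycle HV B'"
  proof (rule depth_acyclic[where f=f and d=d])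
    show "\<forall>e\<in>B'. \<exists>w. e = {w, f w} \<and> d (f w) < d w"
    proof
      fix e assume "e \<in> B'"
      then consider (n) "e = {v,x}" | (o) "e \<in> B" "e \<noteq> {x,p}" unfolding B'_def by blast
      then show "\<exists>w. e = {w, f w} \<and> d (f w) < d w"
      proof cases
        case n
        have "e = {x, f x}" using n by (simp add: f_def insert_commute)
        moreover have "d (f x) < d x" using dv dx by (simp add: f_def)
        ultimately show ?thesis by (intro exI[of _ x] conjI)
      next
        case o
        obtain w where w: "w \<in> HV" "w \<noteq> r" "e = {w, T.P w ! 1}" using T.edge_parent[OF o(1)] by meson
        have wx: "w \<noteq> x"
        proof
          assume "w = x"
          then have "e = {x,p}" using w(3) p_def by simp
          then show False using o(2) by simp
        qed
        define q where "q = T.P w ! 1"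
        have Pw: "T.P w = w # T.P q" and qHV: "q \<in> HV" using T.P_parent[OF w(1) w(2)] unfolding q_def by auto
        have fw: "f w = q" using wx unfolding f_def q_def by simp
        have "d q < d w"
        proof (cases "x \<in> set (T.P q)")
          case True
          then have xw: "x \<in> set (T.P w)" using Pw by simp
          obtain Aq where "T.P q = Aq @ T.P x" using T.P_suffix[OF qHV True] by blast
          then have "L x \<le> L q" unfolding L_def by simp
          moreover have "L w = L q + 1" using Pw unfolding L_def by simp
          ultimately show ?thesis unfolding d_def using True xw by simp
        next
          case False
          then have "x \<notin> set (T.P w)" using Pw wx by simp
          then show ?thesis unfolding d_def using False Pw by (simp add: L_def)
        qed
        then show ?thesis using w(3) fw q_def by (intro exI[of _ w]) simp
      qed
    qed
  qed
  have newpath: "\<exists>Q. gpath HV B' Q \<and> hd Q = w \<and> last Q = r \<and> length Q = d w" if wHV: "w \<in> HV" for w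
  proof (cases "x \<in> set (T.P w)")
    case False
    have "walk HV B' (T.P w)" unfolding B'_def using walk_avoid[OF T.P_walk[OF wHV], of x p "{v,x}"] False by simp
    then show ?thesis using T.P_props[OF wHV] T.P_dist[OF wHV] False unfolding d_def L_def gpath_def
      by (intro exI[of _ "T.P w"]) simp
  next
    case True
    obtain A where A: "T.P w = A @ T.P x" using T.P_suffix[OF wHV True] by blast
    have A2: "T.P w = (A @ [x]) @ T.P p" using A Pxp by simp
    have dw: "distinct (T.P w)" using T.P_dist[OF wHV] .
    obtain tp where tp: "T.P p = p # tp" using T.P_hd[OF pHV] by blast
    have pnA: "\<not> (x \<in> set (A @ [x]) \<and> p \<in> set (A @ [x]))" using dw A2 tp by auto
    have w1: "walk HV B (A @ [x])"
      using walk_appendD1[of HV B "A @ [x]" "T.P p"] T.P_walk[OF wHV] A2 by simp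
    have w1': "walk HV B' (A @ [x])" using walk_avoid[OF w1, of x p "{v,x}"] pnA unfolding B'_def by simp
    obtain tv where tv: "T.P v = v # tv" using T.P_hd[OF vHV] by blast
    have w2: "walk HV B' (T.P v)" using walk_avoid[OF T.P_walk[OF vHV], of x p "{v,x}"] xnPv unfolding B'_def by simp
    have w2': "walk HV B' (x # T.P v)" using w2 tv xHV by (simp add: walk_Cons_Cons B'_def insert_commute)
    have wQ: "walk HV B' (A @ x # T.P v)" using walk_append[OF w1' w2'] .
    have dQ: "distinct (A @ x # T.P v)"
    proof -
      have d1: "distinct A" "x \<notin> set A" "set A \<inter> set (T.P p) = {}" using dw A2 by auto
      have "set (T.P v) \<subseteq> set (T.P p)" using Ap by auto
      then have "set A \<inter> set (T.P v) = {}" using d1(3) by blast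
      then show ?thesis using d1 xnPv T.P_dist[OF vHV] by auto
    qed
    have hQ: "hd (A @ x # T.P v) = w"
    proof (cases A)
      case Nil
      then have "T.P w = T.P x" using A by simp
      then have "w = x" using T.P_props[OF wHV] T.P_props[OF xHV] by metis
      then show ?thesis using Nil by simp
    next
      case (Cons a A')
      then show ?thesis using A T.P_props[OF wHV] by simp
    qed
    have lQ: "last (A @ x # T.P v) = r" using T.P_props[OF vHV] tv by simp
    have "L w = length A + L x" using A unfolding L_def by simp
    then have lenQ: "length (A @ x # T.P v) = d w" using True unfolding d_def L_def by simp
    show ?thesis using wQ dQ hQ lQ lenQ unfolding gpath_def by blast
  qed
  have B'sub: "B' \<subseteq> H_edges V E F" using Bsub two_sub twoE unfolding B'_def by blast
  have conn': "\<forall>w\<in>HV. \<exists>xs. walk HV B' xs \<and> hd xs = w \<and> last xs = r"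
    using newpath unfolding gpath_def by blast
  interpret T': rtree HV B' r
  proof
    show "\<forall>e\<in>B'. \<exists>a b. e = {a,b} \<and> a \<noteq> b \<and> a \<in> HV \<and> b \<in> HV"
    proof
      fix e assume "e \<in> B'"
      with B'sub have "e \<in> H_edges V E F" by (rule subsetD)
      with Hed show "\<exists>a b. e = {a,b} \<and> a \<noteq> b \<and> a \<in> HV \<and> b \<in> HV" by (rule bspec)
    qed
    show "\<forall>w\<in>HV. \<exists>xs. walk HV B' xs \<and> hd xs = w \<and> last xs = r" by (rule conn')
    show "\<not> has_cycle HV B'" by (rule acyc')
    show "r \<in> HV" by (rule rHV)
  qed
  have lev': "level HV B' r w = d w" if wHV: "w \<in> HV" for w
  proof -
    obtain Q where Q: "gpath HV B' Q" "hd Q = w" "last Q = r" "length Q = d w" using newpath[OF wHV] by blast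
    then have "T'.P w = Q" using T'.P_unique by blast
    then show ?thesis using Q(4) by (simp add: level_def)
  qed
  have skel': "skeleton V E F B' r"
    unfolding skeleton_def is_tree_def
    using B'sub conn_to_root[OF conn'] acyc' rT unfolding HV_def by blast
  define g where "g i = (\<Sum>w\<in>{w \<in> HV. level HV B r w = i}. deg B w)" for i
  define g' where "g' i = (\<Sum>w\<in>{w \<in> HV. level HV B' r w = i}. deg B' w)" for i
  have cfg: "config V E F B r = card (B \<inter> TE) # map g [1..<card HV + 1]"
    unfolding config_def g_def HV_def TE_def by simp
  have cfg': "config V E F B' r = card (B' \<inter> TE) # map g' [1..<card HV + 1]"
    unfolding config_def g'_def HV_def TE_def by simp
  have lvx: "L v < L x" using lvp Lxp by simp
  have setsame: "{w \<in> HV. level HV B' r w = i} = {w \<in> HV. level HV B r w = i}" if i: "i \<le> L v" for i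
  proof (intro Collect_cong conj_cong refl)
    fix w assume wHV: "w \<in> HV"
    show "(level HV B' r w = i) = (level HV B r w = i)"
    proof (cases "x \<in> set (T.P w)")
      case True
      obtain A where "T.P w = A @ T.P x" using T.P_suffix[OF wHV True] by blast
      then have "L x \<le> L w" unfolding L_def by simp
      then have "L w \<noteq> i" "d w \<noteq> i" using lvx i True unfolding d_def by auto
      then show ?thesis using lev'[OF wHV] levB by simp
    next
      case False
      then show ?thesis using lev'[OF wHV] levB unfolding d_def by simp
    qed
  qed
  have degsame: "deg B' w = deg B w + (if w = v then 1 else 0)" if "w \<noteq> x" "w \<noteq> p" for w
  proof (cases "w = v")
    case True
    have "{e \<in> B'. w \<in> e} = insert {v,x} {e \<in> B. w \<in> e}"
      unfolding B'_def using True that by auto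
    moreover have "{v,x} \<notin> {e \<in> B. w \<in> e}" using vxB by simp
    moreover have "finite {e \<in> B. w \<in> e}" using Bfin by simp
    ultimately show ?thesis using True unfolding deg_def by simp
  next
    case False
    have "{e \<in> B'. w \<in> e} = {e \<in> B. w \<in> e}"
      unfolding B'_def using False that by auto
    then show ?thesis using False unfolding deg_def by simp
  qed
  have xlev: "level HV B r x \<noteq> i" "level HV B r p \<noteq> i" if "i \<le> L v" for i
    using that lvx lvp levB by auto
  have geq: "g' i = g i" if "i < L v" for i
  proof -
    have "g' i = (\<Sum>w\<in>{w \<in> HV. level HV B r w = i}. deg B' w)"
      unfolding g'_def using setsame that by simp
    also have "\<dots> = g i" unfolding g_def
    proof (rule sum.cong[OF refl])
      fix w assume "w \<in> {w \<in> HV. level HV B r w = i}"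
      then have "w \<noteq> x" "w \<noteq> p" "w \<noteq> v" using xlev[of i] that levB[of v] by auto
      then show "deg B' w = deg B w" using degsame by simp
    qed
    finally show ?thesis .
  qed
  have gv: "g (L v) < g' (L v)"
  proof -
    let ?S = "{w \<in> HV. level HV B r w = L v}"
    have finS: "finite ?S" using finHV by simp
    have vS: "v \<in> ?S" using vHV levB by simp
    have "g' (L v) = (\<Sum>w\<in>?S. deg B' w)"
      unfolding g'_def using setsame by simp
    also have "\<dots> = (\<Sum>w\<in>?S. deg B w + (if w = v then 1 else 0))"
    proof (rule sum.cong[OF refl])
      fix w assume "w \<in> ?S"
      then have "w \<noteq> x" "w \<noteq> p" using xlev[of "L v"] by auto
      then show "deg B' w = deg B w + (if w = v then 1 else 0)" using degsame by simp
    qed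
    also have "\<dots> = g (L v) + 1" unfolding g_def sum.distrib using finS vS by simp
    finally show ?thesis by simp
  qed
  have cle: "card (B \<inter> TE) \<le> card (B' \<inter> TE)"
  proof -
    have eq: "B' \<inter> TE = insert {v,x} ((B \<inter> TE) - {{x,p}})" unfolding B'_def using twoE by auto
    have fin: "finite (B \<inter> TE)" using Bfin by simp
    have "{v,x} \<notin> (B \<inter> TE) - {{x,p}}" using vxB by simp
    then have "card (B' \<inter> TE) = Suc (card ((B \<inter> TE) - {{x,p}}))" unfolding eq using fin by simp
    moreover have "card (B \<inter> TE) \<le> Suc (card ((B \<inter> TE) - {{x,p}}))"
      using fin by (simp add: card_Diff_singleton_if, linarith)
    ultimately show ?thesis by simp
  qed
  have Lv1: "1 \<le> L v" using T.P_ne[OF vHV] unfolding L_def by (cases "T.P v") auto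
  have LvN: "L v \<le> card HV"
  proof -
    have "L v = card (set (T.P v))" using distinct_card[OF T.P_dist[OF vHV]] unfolding L_def by simp
    also have "\<dots> \<le> card HV" using card_mono[OF finHV T.P_set[OF vHV]] .
    finally show ?thesis .
  qed
  have lex: "(config V E F B r, config V E F B' r) \<in> lexord {(a, b). a < b}"
  proof (cases "card (B \<inter> TE) < card (B' \<inter> TE)")
    case True
    then show ?thesis unfolding cfg cfg' by simp
  next
    case False
    then have ceq: "card (B \<inter> TE) = card (B' \<inter> TE)" using cle by simp
    have "(map g [1..<card HV + 1], map g' [1..<card HV + 1]) \<in> lexord {(a, b). a < b}"
      using lex_lemma[of "L v" "card HV" g g'] Lv1 LvN geq gv by simp
    then show ?thesis unfolding cfg cfg' using ceq by simp
  qed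
  show False using highest skel' lex by blast
qed

end
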